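(* For every integer $s\ge1$, let $M_s^\star=(A-LC)^{s-1}L\in\mathbb R^{n\times p}$. Then $\|M_s^\star\|\le\kappa_F^2\gamma_F^{s-1}$ and $\|M_s^\star\|_F\le\sqrt{\min\{p,n\}}\,\kappa_F^2\gamma_F^{s-1}$. Moreover, for every integer $h\ge1$, the matrix $M^\star=[M_1^\star,\dots,M_h^\star]\in\mathbb R^{n\times ph}$ satisfies $\|M^\star\|_F\le\sqrt{\min\{p,n\}}\frac{\kappa_F^2}{1-\gamma_F}$.
   Context: Standing setup. Consider the discrete-time LTI system $x_{t+1}=Ax_t+w_t$, $y_t=Cx_t+v_t$ ($t\ge0$) with $x_t\in\mathbb R^n$, $y_t\in\mathbb R^p$, $x_0=0$, $w_t\overset{iid}{\sim}\mathcal N(0,W)$, $v_t\overset{iid}{\sim}\mathcal N(0,V)$, the two noise sequences independent. Assume $(A,W^{1/2})$ is stabilizable and $(A,C)$ is detectable. Let $\Sigma\succeq0$ be the unique positive semidefinite solution of $\Sigma=A\Sigma A^\top-A\Sigma C^\top(C\Sigma C^\top+V)^{-1}C\Sigma A^\top+W$ and $L=A\Sigma C^\top(C\Sigma C^\top+V)^{-1}$. Known constants $\alpha_0,\alpha_1,\psi,\bar\sigma>0$ satisfy $\alpha_0I_n\preceq W\preceq\alpha_1I_n$, $\alpha_0I_p\preceq V\preceq\alpha_1I_p$, $\|C\|\le\psi$, $\|\Sigma\|\le\bar\sigma$. Set $\kappa_F=\sqrt{\bar\sigma/\alpha_0}$ and $\gamma_F=1-\frac{\alpha_0}{2\bar\sigma}$.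 $\|\cdot\|$ is the Euclidean/spectral norm and $\|\cdot\|_F$ the Frobenius norm. *)

theory Defs
  imports "HOL-Analysis.Analysis"
begin

text \<open>The norm of a matrix of type real^'c^'r is the Frobenius norm; the spectral norm
  is the operator norm of the induced linear map.\<close>

primrec matpow :: "real^'n^'n \<Rightarrow> nat \<Rightarrow> real^'n^'n" where
  "matpow M 0 = mat 1"
| "matpow M (Suc k) = M ** matpow M k"

definition spec_norm :: "real^'c^'r \<Rightarrow> real" where
  "spec_norm M = onorm (\<lambda>x. M *v x)"

definition frob_norm :: "real^'c^'r \<Rightarrow> real" where
  "frob_norm M = sqrt (\<Sum>i\<in>UNIV. \<Sum>j\<in>UNIV. (M $ i $ j)^2)"

definition psd :: "real^'n^'n \<Rightarrow> bool" where
  "psd S \<longleftrightarrow> transpose S = S \<and> (\<forall>x. 0 \<le> x \<bullet> (S *v x))"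

definition loewner_le :: "real^'n^'n \<Rightarrow> real^'n^'n \<Rightarrow> bool" where
  "loewner_le X Y \<longleftrightarrow> psd (Y - X)"

definition msqrt :: "real^'n^'n \<Rightarrow> real^'n^'n" where
  "msqrt W = (THE B. psd B \<and> B ** B = W)"

definition schur_stable :: "real^'n^'n \<Rightarrow> bool" where
  "schur_stable M \<longleftrightarrow> (\<lambda>k. matpow M k) \<longlonglongrightarrow> 0"

definition stabilizable :: "real^'n^'n \<Rightarrow> real^'m^'n \<Rightarrow> bool" where
  "stabilizable A B \<longleftrightarrow> (\<exists>K :: real^'n^'m. schur_stable (A + B ** K))"

definition detectable :: "real^'n^'n \<Rightarrow> real^'n^'p \<Rightarrow> bool" where
  "detectable A C \<longleftrightarrow> (\<exists>L :: real^'p^'n. schur_stable (A - L ** C))"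

text \<open>Horizontal concatenation [M 1, ..., M h] of n x p blocks, as an n x (p h) matrix given
  by its entries: column (s, j) (s in {1..h}, j a column of block s) is column (s-1)p + j.\<close>
definition hcat_entry :: "(nat \<Rightarrow> real^'p^'n) \<Rightarrow> 'n \<Rightarrow> nat \<times> 'p \<Rightarrow> real" where
  "hcat_entry Ms i c = Ms (fst c) $ i $ snd c"

definition hcat_frob_norm :: "(nat \<Rightarrow> real^'p^'n) \<Rightarrow> nat \<Rightarrow> real" where
  "hcat_frob_norm Ms h = sqrt (\<Sum>i\<in>UNIV. \<Sum>c\<in>{1..h} \<times> UNIV. (hcat_entry Ms i c)^2)"

end

theory Submission
  imports Defs
begin


lemma dotT: "(transpose M *v x) \<bullet> y = x \<bullet> ((M::real^'a^'b) *v y)"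
  by (simp add: dot_lmul_matrix)

lemma transpose_diff': "transpose (A - B) = transpose A - transpose (B::real^'a^'b)"
  by (simp add: transpose_def vec_eq_iff)

lemma transpose_add': "transpose (A + B) = transpose A + transpose (B::real^'a^'b)"
  by (simp add: transpose_def vec_eq_iff)

lemma mvT: "(A ** B) *v x = (A::real^'a^'b) *v (B *v x)"
  by (simp add: matrix_vector_mul_assoc)

lemma psdD: "psd S \<Longrightarrow> 0 \<le> x \<bullet> (S *v x)" "psd S \<Longrightarrow> transpose S = S"
  by (auto simp: psd_def)

lemma loewD:
  assumes "loewner_le (a *\<^sub>R mat 1) (W::real^'n^'n)"
  shows "a * (x \<bullet> x) \<le> x \<bullet> (W *v x)" "transpose W = W"
proof -
  have p: "psd (W - a *\<^sub>R mat 1)" using assms by (simp add: loewner_le_def)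
  have "0 \<le> x \<bullet> ((W - a *\<^sub>R mat 1) *v x)" using psdD(1)[OF p] .
  also have "(W - a *\<^sub>R mat 1) *v x = W *v x - a *\<^sub>R x"
    by (simp add: matrix_vector_mult_diff_rdistrib flip: scaleR_matrix_vector_assoc)
  finally show "a * (x \<bullet> x) \<le> x \<bullet> (W *v x)" by (simp add: inner_diff_right)
  have "transpose (W - a *\<^sub>R mat 1) = W - a *\<^sub>R mat 1" using psdD(2)[OF p] .
  then show "transpose W = W" by (simp add: transpose_diff' transpose_scalar)
qed

lemma spec_bound:
  fixes M :: "real^'a^'b"
  assumes "\<And>x. norm (transpose M *v x) \<le> c * norm x" "0 \<le> c"
  shows "norm (M *v y) \<le> c * norm y"
proof -
  have "norm (M *v y) ^ 2 = (transpose M *v (M *v y)) \<bullet> y"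
    by (simp only: dotT power2_norm_eq_inner)
  also have "\<dots> \<le> norm (transpose M *v (M *v y)) * norm y" by (rule norm_cauchy_schwarz)
  also have "\<dots> \<le> c * norm (M *v y) * norm y" using assms(1) by (simp add: mult_right_mono)
  finally have h: "norm (M *v y) ^ 2 \<le> c * norm (M *v y) * norm y" .
  show ?thesis
  proof (cases "norm (M *v y) = 0")
    case True then show ?thesis using assms(2) by simp
  next
    case False
    then have "0 < norm (M *v y)" by simp
    with h show ?thesis by (simp add: power2_eq_square)
  qed
qed

lemma spec_norm_le:
  fixes M :: "real^'a^'b"
  assumes "\<And>y. norm (M *v y) \<le> c * norm y"
  shows "spec_norm M \<le> c"
  unfolding spec_norm_def by (rule onorm_le) (rule assms)

lemma spec_norm_app: "norm ((M::real^'a^'b) *v x) \<le> spec_norm M * norm x"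
  unfolding spec_norm_def by (rule onorm) simp

lemma col_sum: "norm ((M::real^'a^'b) *v axis j 1) ^ 2 = (\<Sum>i\<in>UNIV. (M $ i $ j)^2)"
  by (simp only: power2_norm_eq_inner matrix_vector_mult_basis) (simp add: column_def inner_vec_def power2_eq_square)

lemma row_sum: "norm (transpose (M::real^'a^'b) *v axis i 1) ^ 2 = (\<Sum>j\<in>UNIV. (M $ i $ j)^2)"
  by (simp only: power2_norm_eq_inner matrix_vector_mult_basis) (simp add: column_def transpose_def inner_vec_def power2_eq_square)



lemma key_identity:
  fixes A S W :: "real^'n^'n" and C :: "real^'n^'p" and V Si :: "real^'p^'p"
    and L :: "real^'p^'n"
  assumes ST: "transpose S = S"
    and D: "S = A ** S ** transpose A - A ** S ** transpose C ** Si ** C ** S ** transpose A + W"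
    and Ld: "L = A ** S ** transpose C ** Si"
    and inv: "(C ** S ** transpose C + V) ** transpose Si = mat 1"
  shows "x \<bullet> (S *v x) = (transpose (A - L ** C) *v x) \<bullet> (S *v (transpose (A - L ** C) *v x))
     + (transpose L *v x) \<bullet> (V *v (transpose L *v x)) + x \<bullet> (W *v x)"
proof -
  define a where "a = transpose A *v x"
  define b where "b = C *v (S *v a)"
  define l where "l = transpose L *v x"
  have hl: "l = transpose Si *v b"
    unfolding l_def b_def a_def Ld by (simp only: matrix_transpose_mul transpose_transpose ST mvT)
  have "(C ** S ** transpose C + V) *v l = b"
    unfolding hl by (simp only: matrix_vector_mul_assoc inv matrix_vector_mul_lid)
  then have hSl: "C *v (S *v (transpose C *v l)) + V *v l = b"
    by (simp only: matrix_vector_mult_add_rdistrib mvT)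
  have hF: "transpose (A - L ** C) *v x = a - transpose C *v l"
    unfolding a_def l_def
    by (simp only: transpose_diff' matrix_transpose_mul matrix_vector_mult_diff_rdistrib mvT)
  have xA: "\<And>y. x \<bullet> (A *v y) = a \<bullet> y" unfolding a_def by (simp only: dotT)
  have aS: "\<And>z. a \<bullet> (S *v (transpose C *v z)) = z \<bullet> b"
  proof -
    fix z
    have "a \<bullet> (S *v (transpose C *v z)) = (transpose S *v a) \<bullet> (transpose C *v z)" by (simp only: dotT)
    also have "\<dots> = (transpose C *v z) \<bullet> (S *v a)" by (simp only: ST inner_commute)
    also have "\<dots> = z \<bullet> b" unfolding b_def by (simp only: dotT)
    finally show "a \<bullet> (S *v (transpose C *v z)) = z \<bullet> b" .
  qed
  have "S *v x = (A ** S ** transpose A - A ** S ** transpose C ** Si ** C ** S ** transpose A + W) *v x"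
    using D by (rule arg_cong)
  also have "\<dots> = A *v (S *v a) - A *v (S *v (transpose C *v (Si *v b))) + W *v x"
    unfolding a_def b_def by (simp only: matrix_vector_mult_add_rdistrib matrix_vector_mult_diff_rdistrib mvT)
  finally have "x \<bullet> (S *v x) = x \<bullet> (A *v (S *v a)) - x \<bullet> (A *v (S *v (transpose C *v (Si *v b)))) + x \<bullet> (W *v x)"
    by (simp add: inner_diff_right inner_add_right)
  also have "\<dots> = a \<bullet> (S *v a) - (Si *v b) \<bullet> b + x \<bullet> (W *v x)" by (simp only: xA aS)
  finally have hD: "x \<bullet> (S *v x) = a \<bullet> (S *v a) - (Si *v b) \<bullet> b + x \<bullet> (W *v x)" .
  have c1: "(transpose C *v l) \<bullet> (S *v a) = l \<bullet> b" unfolding b_def by (simp only: dotT)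
  have c2: "(transpose C *v l) \<bullet> (S *v (transpose C *v l)) = l \<bullet> (C *v (S *v (transpose C *v l)))"
    by (simp only: dotT)
  have hQ: "(a - transpose C *v l) \<bullet> (S *v (a - transpose C *v l))
      = a \<bullet> (S *v a) - 2 * (l \<bullet> b) + l \<bullet> (C *v (S *v (transpose C *v l)))"
    by (simp del: transpose_matrix_vector add: matrix_vector_mult_diff_distrib inner_diff_left inner_diff_right aS c1 c2)
  have hlb: "l \<bullet> b = (Si *v b) \<bullet> b"
    unfolding hl dotT by (rule inner_commute)
  have hV: "l \<bullet> (C *v (S *v (transpose C *v l))) + l \<bullet> (V *v l) = l \<bullet> b"
    using hSl by (simp add: inner_add_right[symmetric])
  show ?thesis
    unfolding hF l_def[symmetric] hQ hD using hV hlb by linarith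
qed



lemma frob_bound:
  fixes M :: "real^'p^'n"
  assumes h: "\<And>x. norm (transpose M *v x) \<le> c * norm x" and c: "0 \<le> c"
  shows "(\<Sum>i\<in>UNIV. \<Sum>j\<in>UNIV. (M $ i $ j)^2) \<le> real (min CARD('p) CARD('n)) * c^2"
proof -
  have hM: "\<And>y. norm (M *v y) \<le> c * norm y" using spec_bound[OF h c] .
  have col: "\<And>j. norm (M *v axis j 1) ^ 2 \<le> c^2"
  proof -
    fix j :: 'p
    have "norm (M *v axis j 1) \<le> c" using hM[of "axis j 1"] by simp
    then show "norm (M *v axis j 1) ^ 2 \<le> c^2" by (rule power_mono) simp
  qed
  have row: "\<And>i. norm (transpose M *v axis i 1) ^ 2 \<le> c^2"
  proof -
    fix i :: 'n
    have "norm (transpose M *v axis i 1) \<le> c" using h[of "axis i 1"] by simp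
    then show "norm (transpose M *v axis i 1) ^ 2 \<le> c^2" by (rule power_mono) simp
  qed
  have "(\<Sum>i\<in>UNIV. \<Sum>j\<in>UNIV. (M $ i $ j)^2) = (\<Sum>j\<in>UNIV. norm (M *v axis j 1) ^ 2)"
    by (simp only: col_sum) (rule sum.swap)
  also have "\<dots> \<le> (\<Sum>j\<in>(UNIV::'p set). c^2)" by (rule sum_mono) (rule col)
  finally have 1: "(\<Sum>i\<in>UNIV. \<Sum>j\<in>UNIV. (M $ i $ j)^2) \<le> real CARD('p) * c^2" by simp
  have "(\<Sum>i\<in>UNIV. \<Sum>j\<in>UNIV. (M $ i $ j)^2) = (\<Sum>i\<in>UNIV. norm (transpose M *v axis i 1) ^ 2)"
    by (simp only: row_sum)
  also have "\<dots> \<le> (\<Sum>i\<in>(UNIV::'n set). c^2)" by (rule sum_mono) (rule row)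
  finally have 2: "(\<Sum>i\<in>UNIV. \<Sum>j\<in>UNIV. (M $ i $ j)^2) \<le> real CARD('n) * c^2" by simp
  show ?thesis using 1 2 by (cases "CARD('p) \<le> CARD('n)") (auto simp: min_def)
qed

lemma geo_sum:
  fixes r :: real
  shows "(\<Sum>s\<in>{1..h}. r^(s-1)) * (1 - r) = 1 - r^h"
proof (induction h)
  case 0 then show ?case by simp
next
  case (Suc h)
  have "{1..Suc h} = insert (Suc h) {1..h}" by auto
  then have "(\<Sum>s\<in>{1..Suc h}. r^(s-1)) = r^h + (\<Sum>s\<in>{1..h}. r^(s-1))" by simp
  then have "(\<Sum>s\<in>{1..Suc h}. r^(s-1)) * (1 - r) = r^h * (1 - r) + (\<Sum>s\<in>{1..h}. r^(s-1)) * (1 - r)"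
    by (simp add: distrib_right)
  also have "\<dots> = r^h * (1 - r) + (1 - r^h)" by (simp only: Suc.IH)
  also have "\<dots> = 1 - r^Suc h" by (simp add: algebra_simps)
  finally show ?case .
qed

lemma geo_bound:
  fixes g :: real
  assumes "0 \<le> g" "g < 1"
  shows "(\<Sum>s\<in>{1..h}. (g^2)^(s-1)) \<le> 1 / (1 - g)^2"
proof -
  have g2: "0 \<le> g^2" "g^2 < 1" using assms by (auto simp: power_less_one_iff abs_square_less_1)
  have "(\<Sum>s\<in>{1..h}. (g^2)^(s-1)) * (1 - g^2) \<le> 1" using geo_sum[of "g^2" h] g2 by simp
  then have "(\<Sum>s\<in>{1..h}. (g^2)^(s-1)) \<le> 1 / (1 - g^2)" using g2 by (simp add: field_simps)
  also have "\<dots> \<le> 1 / (1 - g)^2"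
  proof (rule frac_le)
    show "0 < (1 - g)^2" using assms by simp
    show "(1 - g)^2 \<le> 1 - g^2" using assms by (simp add: power2_eq_square algebra_simps mult_right_le_one_le)
  qed simp_all
  finally show ?thesis .
qed



lemma matpow_T: "transpose (matpow F (Suc k)) *v x = transpose (matpow F k) *v (transpose F *v (x::real^'n))"
  by (simp only: matpow.simps matrix_transpose_mul mvT)

lemma sq_lemma:
  fixes s a g kk X G :: real
  assumes "kk^2 = s/a" "G = (g^k)^2"
  shows "s / a * (s / a * G) * X^2 = (kk^2 * g^k * X)^2"
  unfolding assms by (simp only: power_mult_distrib) (simp add: power2_eq_square mult_ac)

theorem lemma1:
  fixes A W \<Sigma> :: "real^'n^'n" and C :: "real^'n^'p" and V :: "real^'p^'p"
    and L :: "real^'p^'n"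
    and \<alpha>\<^sub>0 \<alpha>\<^sub>1 \<psi> \<sigma> \<kappa> \<gamma> :: real
  assumes stab: "stabilizable A (msqrt W)"
    and detect: "detectable A C"
    and Sigma_psd: "psd \<Sigma>"
    and DARE: "\<Sigma> = A ** \<Sigma> ** transpose A
        - A ** \<Sigma> ** transpose C ** matrix_inv (C ** \<Sigma> ** transpose C + V) ** C ** \<Sigma> ** transpose A + W"
    and L_def: "L = A ** \<Sigma> ** transpose C ** matrix_inv (C ** \<Sigma> ** transpose C + V)"
    and pos: "\<alpha>\<^sub>0 > 0" "\<alpha>\<^sub>1 > 0" "\<psi> > 0" "\<sigma> > 0"
    and W_lb: "loewner_le (\<alpha>\<^sub>0 *\<^sub>R mat 1) W" and W_ub: "loewner_le W (\<alpha>\<^sub>1 *\<^sub>R mat 1)"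
    and V_lb: "loewner_le (\<alpha>\<^sub>0 *\<^sub>R mat 1) V" and V_ub: "loewner_le V (\<alpha>\<^sub>1 *\<^sub>R mat 1)"
    and C_bd: "spec_norm C \<le> \<psi>"
    and Sigma_bd: "spec_norm \<Sigma> \<le> \<sigma>"
    and kappa_def: "\<kappa> = sqrt (\<sigma> / \<alpha>\<^sub>0)"
    and gamma_def: "\<gamma> = 1 - \<alpha>\<^sub>0 / (2 * \<sigma>)"
  shows "(\<forall>s::nat. s \<ge> 1 \<longrightarrow>
            spec_norm (matpow (A - L ** C) (s - 1) ** L) \<le> \<kappa>^2 * \<gamma>^(s - 1)
          \<and> frob_norm (matpow (A - L ** C) (s - 1) ** L)
              \<le> sqrt (real (min CARD('p) CARD('n))) * \<kappa>^2 * \<gamma>^(s - 1))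
       \<and> (\<forall>h::nat. h \<ge> 1 \<longrightarrow>
            hcat_frob_norm (\<lambda>s. matpow (A - L ** C) (s - 1) ** L) h
              \<le> sqrt (real (min CARD('p) CARD('n))) * \<kappa>^2 / (1 - \<gamma>))"
proof -
  note a0 = pos(1) and s0 = pos(4)
  have SigT: "transpose \<Sigma> = \<Sigma>" using psdD(2)[OF Sigma_psd] .
  have Sig0: "\<And>x. 0 \<le> x \<bullet> (\<Sigma> *v x)" using psdD(1)[OF Sigma_psd] .
  have Wlb: "\<And>x. \<alpha>\<^sub>0 * (x \<bullet> x) \<le> x \<bullet> (W *v x)" using loewD(1)[OF W_lb] .
  have Vlb: "\<And>x. \<alpha>\<^sub>0 * (x \<bullet> x) \<le> x \<bullet> (V *v x)" using loewD(1)[OF V_lb] .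
  have VT: "transpose V = V" using loewD(2)[OF V_lb] .
  define S where "S = C ** \<Sigma> ** transpose C + V"
  have Spos: "\<alpha>\<^sub>0 * (x \<bullet> x) \<le> x \<bullet> (S *v x)" for x
  proof -
    have "x \<bullet> (S *v x) = x \<bullet> (C *v (\<Sigma> *v (transpose C *v x))) + x \<bullet> (V *v x)"
      unfolding S_def by (simp only: matrix_vector_mult_add_rdistrib mvT inner_add_right)
    also have "x \<bullet> (C *v (\<Sigma> *v (transpose C *v x))) = (transpose C *v x) \<bullet> (\<Sigma> *v (transpose C *v x))"
      by (simp only: dotT)
    finally show ?thesis using Sig0[of "transpose C *v x"] Vlb[of x] by linarith
  qed
  have invS: "invertible S"
    unfolding invertible_left_inverse matrix_left_invertible_ker
  proof (intro allI impI)
    fix x assume "S *v x = 0"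
    then have "\<alpha>\<^sub>0 * (x \<bullet> x) \<le> 0" using Spos[of x] by simp
    then have "x \<bullet> x \<le> 0" using a0 by (simp add: mult_le_0_iff)
    then show "x = 0" by (metis inner_eq_zero_iff inner_ge_zero order_antisym)
  qed
  define Si where "Si = matrix_inv S"
  have SiS: "Si ** S = mat 1"
    using invS unfolding invertible_def Si_def matrix_inv_def by (rule someI2_ex) auto
  have ST: "transpose S = S"
    unfolding S_def by (simp only: transpose_add' matrix_transpose_mul transpose_transpose SigT VT matrix_mul_assoc)
  have inv: "(C ** \<Sigma> ** transpose C + V) ** transpose Si = mat 1"
  proof -
    have "transpose (Si ** S) = transpose (mat 1 :: real^'p^'p)" using SiS by simp
    then have "S ** transpose Si = mat 1" by (simp only: matrix_transpose_mul ST transpose_mat)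
    then show ?thesis unfolding S_def .
  qed
  define F where "F = A - L ** C"
  define Q where "Q x = x \<bullet> (\<Sigma> *v x)" for x
  have key: "Q x = Q (transpose F *v x) + (transpose L *v x) \<bullet> (V *v (transpose L *v x)) + x \<bullet> (W *v x)" for x
    unfolding Q_def F_def
    by (rule key_identity[OF SigT _ _ inv]) (use DARE L_def in \<open>simp_all add: S_def Si_def\<close>)
  have Qlb: "\<alpha>\<^sub>0 * (x \<bullet> x) \<le> Q x" for x
    using key[of x] Sig0[of "transpose F *v x"] Vlb[of "transpose L *v x"] Wlb[of x] a0
    unfolding Q_def by (smt (verit) inner_ge_zero mult_nonneg_nonneg)
  have Qub: "Q x \<le> \<sigma> * (x \<bullet> x)" for x
  proof -
    have "Q x \<le> norm x * norm (\<Sigma> *v x)" unfolding Q_def by (rule norm_cauchy_schwarz)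
    also have "\<dots> \<le> norm x * (\<sigma> * norm x)"
      using spec_norm_app[of \<Sigma> x] Sigma_bd by (intro mult_left_mono) (auto intro: order_trans[OF _ mult_right_mono])
    finally show ?thesis by (simp add: power2_norm_eq_inner[symmetric] power2_eq_square algebra_simps)
  qed
  have as: "\<alpha>\<^sub>0 \<le> \<sigma>"
  proof -
    define e where "e = (axis undefined 1 :: real^'n)"
    have "e \<bullet> e = 1" unfolding e_def by (simp add: inner_axis_axis)
    then show ?thesis using Qlb[of e] Qub[of e] by simp
  qed
  define \<rho> where "\<rho> = 1 - \<alpha>\<^sub>0 / \<sigma>"
  have r0: "0 \<le> \<rho>" using as s0 unfolding \<rho>_def by simp
  have contr: "Q (transpose F *v x) \<le> \<rho> * Q x" for x
  proof -
    have 1: "Q (transpose F *v x) \<le> Q x - \<alpha>\<^sub>0 * (x \<bullet> x)"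
      using key[of x] Vlb[of "transpose L *v x"] Wlb[of x] a0
      by (smt (verit) inner_ge_zero mult_nonneg_nonneg)
    have "\<alpha>\<^sub>0 / \<sigma> * Q x \<le> \<alpha>\<^sub>0 / \<sigma> * (\<sigma> * (x \<bullet> x))"
      using Qub[of x] a0 s0 by (intro mult_left_mono) auto
    also have "\<dots> = \<alpha>\<^sub>0 * (x \<bullet> x)" using s0 by simp
    finally show ?thesis using 1 unfolding \<rho>_def by (simp add: algebra_simps)
  qed
  have Lb: "\<alpha>\<^sub>0 * ((transpose L *v x) \<bullet> (transpose L *v x)) \<le> Q x" for x
    using key[of x] Sig0[of "transpose F *v x"] Vlb[of "transpose L *v x"] Wlb[of x] a0
    unfolding Q_def by (smt (verit) inner_ge_zero mult_nonneg_nonneg)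
  have iter: "Q (transpose (matpow F k) *v x) \<le> \<rho>^k * Q x" for k x
  proof (induction k arbitrary: x)
    case 0 then show ?case by simp
  next
    case (Suc k)
    have "Q (transpose (matpow F (Suc k)) *v x) = Q (transpose (matpow F k) *v (transpose F *v x))"
      by (simp only: matpow_T)
    also have "\<dots> \<le> \<rho>^k * Q (transpose F *v x)" by (rule Suc.IH)
    also have "\<dots> \<le> \<rho>^k * (\<rho> * Q x)" using contr[of x] r0 by (intro mult_left_mono) auto
    finally show ?case by (simp add: algebra_simps)
  qed
  have kap: "\<kappa>^2 = \<sigma> / \<alpha>\<^sub>0" unfolding kappa_def using a0 s0 by simp
  have g0: "0 \<le> \<gamma>" "\<gamma> < 1" unfolding gamma_def using a0 s0 as by (auto simp: field_simps)
  have rg: "\<rho> \<le> \<gamma>^2" unfolding \<rho>_def gamma_def using s0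
    by (simp add: power2_eq_square field_simps)
  have k1: "1 \<le> \<sigma> / \<alpha>\<^sub>0" using as a0 by simp
  define c where "c k = \<kappa>^2 * \<gamma>^k" for k
  have c0: "0 \<le> c k" for k unfolding c_def using g0 by simp
  have MT: "norm (transpose (matpow F k ** L) *v x) \<le> c k * norm x" for k x
  proof -
    define z where "z = transpose (matpow F k) *v x"
    have e: "transpose (matpow F k ** L) *v x = transpose L *v z"
      unfolding z_def by (simp only: matrix_transpose_mul mvT)
    have "\<alpha>\<^sub>0 * norm (transpose L *v z) ^ 2 \<le> Q z" using Lb[of z] by (simp add: power2_norm_eq_inner)
    also have "\<dots> \<le> \<rho>^k * Q x" unfolding z_def by (rule iter)
    also have "\<dots> \<le> \<rho>^k * (\<sigma> * norm x ^ 2)" using Qub[of x] r0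
      by (intro mult_left_mono) (auto simp: power2_norm_eq_inner)
    finally have "norm (transpose L *v z) ^ 2 \<le> (\<rho>^k * (\<sigma> * norm x ^ 2)) / \<alpha>\<^sub>0"
      using a0 by (simp add: pos_le_divide_eq mult.commute)
    also have "\<dots> = \<sigma> / \<alpha>\<^sub>0 * \<rho>^k * norm x ^ 2" by simp
    finally have 1: "norm (transpose L *v z) ^ 2 \<le> \<sigma> / \<alpha>\<^sub>0 * \<rho>^k * norm x ^ 2" .
    have "\<rho>^k \<le> (\<gamma>^2)^k" using rg r0 by (rule power_mono)
    also have "\<dots> \<le> \<sigma> / \<alpha>\<^sub>0 * (\<gamma>^2)^k" using mult_right_mono[OF k1, of "(\<gamma>^2)^k"] by simp
    finally have "\<sigma> / \<alpha>\<^sub>0 * \<rho>^k * norm x ^ 2 \<le> \<sigma> / \<alpha>\<^sub>0 * (\<sigma> / \<alpha>\<^sub>0 * (\<gamma>^2)^k) * norm x ^ 2"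
      using k1 by (intro mult_right_mono mult_left_mono) auto
    also have "\<dots> = (c k * norm x)^2"
    proof -
      have "(\<gamma>^2)^k = (\<gamma>^k)^2" by (simp only: power_mult[symmetric] mult.commute)
      then show ?thesis unfolding c_def by (rule sq_lemma[OF kap])
    qed
    finally have "norm (transpose L *v z) ^ 2 \<le> (c k * norm x)^2" using 1 by linarith
    then have "norm (transpose L *v z) \<le> c k * norm x"
      by (rule power2_le_imp_le) (use c0[of k] in simp)
    then show ?thesis unfolding e .
  qed
  let ?m = "real (min CARD('p) CARD('n))"
  have fb: "(\<Sum>i\<in>UNIV. \<Sum>j\<in>UNIV. (matpow F k ** L) $ i $ j ^ 2) \<le> ?m * (c k)^2" for k
    by (rule frob_bound[OF MT c0])
  have part1: "spec_norm (matpow F k ** L) \<le> c k \<and> frob_norm (matpow F k ** L) \<le> sqrt ?m * c k" for k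
  proof
    show "spec_norm (matpow F k ** L) \<le> c k" by (rule spec_norm_le, rule spec_bound[OF MT c0])
    have "frob_norm (matpow F k ** L) \<le> sqrt (?m * (c k)^2)" unfolding frob_norm_def
      using fb by (rule real_sqrt_le_mono)
    also have "\<dots> = sqrt ?m * c k" using c0 by (simp add: real_sqrt_mult)
    finally show "frob_norm (matpow F k ** L) \<le> sqrt ?m * c k" .
  qed
  have part2: "hcat_frob_norm (\<lambda>s. matpow F (s - 1) ** L) h \<le> sqrt ?m * \<kappa>^2 / (1 - \<gamma>)" for h
  proof -
    let ?M = "\<lambda>s. matpow F (s - 1) ** L"
    have "(\<Sum>i\<in>UNIV. \<Sum>c\<in>{1..h} \<times> UNIV. (hcat_entry ?M i c)^2)
        = (\<Sum>i\<in>UNIV. \<Sum>s\<in>{1..h}. \<Sum>j\<in>UNIV. (?M s $ i $ j)^2)"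
      unfolding hcat_entry_def by (simp only: sum.cartesian_product' fst_conv snd_conv)
    also have "\<dots> = (\<Sum>s\<in>{1..h}. \<Sum>i\<in>UNIV. \<Sum>j\<in>UNIV. (?M s $ i $ j)^2)" by (rule sum.swap)
    also have "\<dots> \<le> (\<Sum>s\<in>{1..h}. ?m * (c (s - 1))^2)" by (rule sum_mono) (rule fb)
    also have "\<dots> = ?m * \<kappa>^4 * (\<Sum>s\<in>{1..h}. (\<gamma>^2)^(s-1))"
    proof -
      have "(c (s - 1))^2 = \<kappa>^4 * (\<gamma>^2)^(s-1)" for s
      proof -
        have "(\<gamma>^(s-1))^2 = (\<gamma>^2)^(s-1)" by (simp only: power_mult[symmetric] mult.commute)
        moreover have "(\<kappa>^2)^2 = \<kappa>^4" by simp
        ultimately show ?thesis unfolding c_def by (simp only: power_mult_distrib)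
      qed
      then show ?thesis by (simp only: sum_distrib_left mult.assoc)
    qed
    also have "\<dots> \<le> ?m * \<kappa>^4 * (1 / (1 - \<gamma>)^2)"
      by (intro mult_left_mono geo_bound g0) auto
    also have "\<dots> = (sqrt ?m * \<kappa>^2 / (1 - \<gamma>))^2"
    proof -
      have e1: "(sqrt ?m)^2 = ?m" by simp
      have e2: "(\<kappa>^2)^2 = \<kappa>^4" by simp
      show ?thesis by (simp only: power_divide power_mult_distrib e1 e2) simp
    qed
    finally show ?thesis unfolding hcat_frob_norm_def using g0
      by (intro real_le_lsqrt) (auto)
  qed
  show ?thesis using part1 part2 unfolding F_def c_def by (auto simp: mult.assoc)
qed

end
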